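(* Let $\alpha,\beta\ge0$ with $\alpha+\beta<1$, $a\ge0$, $b>0$, $0<T<\infty$. Assume $f\in L_\infty(0,T')$ for every $T'<T$ and that for a.e. $t\in(0,T)$ $$0\le f(t)\le a+b\int_0^t\frac{f(\tau)}{\tau^\alpha(t-\tau)^\beta}d\tau.$$ Then $f\in L_\infty(0,T)$ and $$\|f\|_{L_\infty(0,T)}\le Ca\exp\Big(Cb^{\frac{1+\alpha+\beta}{1-\alpha-\beta}}T^{1+\alpha+\beta}\Big),$$ where $C$ depends only on $\alpha$ and $\beta$; moreover $C=1$ when $\alpha=\beta=0$. *)

theory Defs
  imports "HOL-Analysis.Analysis"
begin

end

theory Submission
  imports Defs
begin



lemma powr_int_0:
  fixes p c :: real
  assumes "p > -1" "c > 0"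
  shows "set_integrable lebesgue {0<..<c} (\<lambda>x. x powr p)"
    "(LINT x:{0<..<c}|lebesgue. x powr p) = c powr (p+1)/(p+1)"
proof -
  have h: "((\<lambda>x. x powr p) has_integral (c powr (p+1)/(p+1))) {0..c}"
    using has_integral_powr_from_0[of p c] assms by auto
  have h2: "((\<lambda>x. x powr p) has_integral (c powr (p+1)/(p+1))) {0<..<c}"
    using h by (subst has_integral_spike_set_eq[where T="{0..c}"])
      (auto intro: negligible_subset[of "{0,c}"])
  show si: "set_integrable lebesgue {0<..<c} (\<lambda>x. x powr p)"
    by (rule nonnegative_absolutely_integrable_1) (use h2 in \<open>auto simp: integrable_on_def\<close>)
  show "(LINT x:{0<..<c}|lebesgue. x powr p) = c powr (p+1)/(p+1)"
    using set_lebesgue_integral_eq_integral(2)[OF si] h2 by (simp add: integral_unique)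
qed

lemma powr_int_refl:
  fixes p c :: real
  assumes "p > -1" "c > 0"
  shows "set_integrable lebesgue {0<..<c} (\<lambda>x. (c - x) powr p)"
    "(LINT x:{0<..<c}|lebesgue. (c - x) powr p) = c powr (p+1)/(p+1)"
proof -
  have h: "((\<lambda>x. x powr p) has_integral (c powr (p+1)/(p+1))) {0..c}"
    using has_integral_powr_from_0[of p c] assms by auto
  then have "((\<lambda>x. (- x) powr p) has_integral (c powr (p+1)/(p+1))) {-c..0}"
    using has_integral_reflect_real[where f="\<lambda>x. x powr p" and a=0 and b=c] by simp
  then have "((\<lambda>x. (-x) powr p) has_integral (c powr (p+1)/(p+1))) (cbox (-c) 0)" by simp
  from has_integral_affinity'[OF this, of 1 "-c"]
  have "((\<lambda>x. (- (x - c)) powr p) has_integral (c powr (p+1)/(p+1))) (cbox 0 c)"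
    by simp
  then have h1: "((\<lambda>x. (c - x) powr p) has_integral (c powr (p+1)/(p+1))) {0..c}"
    by simp
  have h2: "((\<lambda>x. (c - x) powr p) has_integral (c powr (p+1)/(p+1))) {0<..<c}"
    using h1 by (subst has_integral_spike_set_eq[where T="{0..c}"])
      (auto intro: negligible_subset[of "{0,c}"])
  show si: "set_integrable lebesgue {0<..<c} (\<lambda>x. (c - x) powr p)"
    by (rule nonnegative_absolutely_integrable_1) (use h2 in \<open>auto simp: integrable_on_def\<close>)
  show "(LINT x:{0<..<c}|lebesgue. (c - x) powr p) = c powr (p+1)/(p+1)"
    using set_lebesgue_integral_eq_integral(2)[OF si] h2 by (simp add: integral_unique)
qed



lemma powr_le_exp: fixes x g :: real assumes "x > 0" "0 < g" "g \<le> 1"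
  shows "x powr g \<le> exp x"
proof (cases "x \<le> 1")
  case True
  then have "x powr g \<le> 1 powr g" using assms by (intro powr_mono2) auto
  then have "x powr g \<le> 1" by simp
  also have "1 \<le> exp x" using assms by simp
  finally show ?thesis .
next
  case False
  then have "x powr g \<le> x powr 1" using assms by (intro powr_mono) auto
  also have "\<dots> \<le> exp x" using assms by (simp add: exp_ge_add_one_self_aux order_trans[OF _ exp_ge_add_one_self])
  finally show ?thesis .
qed

lemma kernel_pw:
  fixes \<alpha> \<beta> a1 l t T \<tau> :: real
  assumes "0 \<le> \<alpha>" "\<alpha> \<le> a1" "0 < a1" "0 \<le> \<beta>" "a1 + \<beta> < 1" "l > 0"
    "0 < \<tau>" "\<tau> < t" "t \<le> T"
  shows "exp (l*\<tau>) / (\<tau> powr \<alpha> * (t-\<tau>) powr \<beta>) \<le> T powr (a1-\<alpha>) * exp (l*t) *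
     ((exp (-(l*t/2)) * (t/2) powr (-\<beta>)) * \<tau> powr (-a1) + ((t/2) powr (-a1) * l powr (-(1-a1-\<beta>))) * (t-\<tau>) powr (a1-1))"
proof -
  define g where "g = 1 - a1 - \<beta>"
  have g: "0 < g" "g \<le> 1" using assms unfolding g_def by auto
  have tt: "t - \<tau> > 0" using assms by auto
  have e1: "exp (l*\<tau>) = exp (l*t) * exp (-(l*(t-\<tau>)))" by (simp add: exp_add[symmetric] algebra_simps)
  have i1: "\<tau> powr (-\<alpha>) \<le> T powr (a1-\<alpha>) * \<tau> powr (-a1)"
  proof -
    have "\<tau> powr (a1-\<alpha>) \<le> T powr (a1-\<alpha>)" using assms by (intro powr_mono2) auto
    then have "\<tau> powr (a1-\<alpha>) * \<tau> powr (-a1) \<le> T powr (a1-\<alpha>) * \<tau> powr (-a1)"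
      by (intro mult_right_mono) auto
    then show ?thesis using assms by (simp add: powr_add[symmetric])
  qed
  have K: "exp (-(l*(t-\<tau>))) * \<tau> powr (-a1) * (t-\<tau>) powr (-\<beta>) \<le>
     (exp (-(l*t/2)) * (t/2) powr (-\<beta>)) * \<tau> powr (-a1) + ((t/2) powr (-a1) * l powr (-g)) * (t-\<tau>) powr (a1-1)"
  proof (cases "\<tau> \<le> t/2")
    case True
    have c1: "exp (-(l*(t-\<tau>))) \<le> exp (-(l*t/2))" using True assms by (simp add: mult_left_mono)
    have c2: "(t-\<tau>) powr (-\<beta>) \<le> (t/2) powr (-\<beta>)"
      using True assms by (intro powr_mono2') auto
    have "exp (-(l*(t-\<tau>))) * \<tau> powr (-a1) * (t-\<tau>) powr (-\<beta>) \<le>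
       (exp (-(l*t/2)) * (t/2) powr (-\<beta>)) * \<tau> powr (-a1)"
    proof -
      have "exp (-(l*(t-\<tau>))) * (t-\<tau>) powr (-\<beta>) \<le> exp (-(l*t/2)) * (t/2) powr (-\<beta>)"
        using c1 c2 by (intro mult_mono) auto
      from mult_right_mono[OF this, of "\<tau> powr (-a1)"] show ?thesis by (simp add: mult_ac)
    qed
    moreover have "0 \<le> ((t/2) powr (-a1) * l powr (-g)) * (t-\<tau>) powr (a1-1)" by simp
    ultimately show ?thesis by linarith
  next
    case False
    have x: "(l*(t-\<tau>)) powr g \<le> exp (l*(t-\<tau>))" using tt assms g by (intro powr_le_exp) auto
    have ex: "exp (-(l*(t-\<tau>))) \<le> (l*(t-\<tau>)) powr (-g)"
      using le_imp_inverse_le[OF x] tt assms by (simp add: powr_minus exp_minus)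
    have ta: "\<tau> powr (-a1) \<le> (t/2) powr (-a1)" using False assms by (intro powr_mono2') auto
    have "exp (-(l*(t-\<tau>))) * \<tau> powr (-a1) * (t-\<tau>) powr (-\<beta>) \<le>
        (l*(t-\<tau>)) powr (-g) * (t/2) powr (-a1) * (t-\<tau>) powr (-\<beta>)"
      using mult_right_mono[OF mult_mono[OF ex ta], of "(t-\<tau>) powr (-\<beta>)"] by simp
    also have "\<dots> = ((t/2) powr (-a1) * l powr (-g)) * (t-\<tau>) powr (a1-1)"
    proof -
      have "(l*(t-\<tau>)) powr (-g) = l powr (-g) * (t-\<tau>) powr (-g)"
        using tt assms by (simp add: powr_mult)
      moreover have "(t-\<tau>) powr (-g) * (t-\<tau>) powr (-\<beta>) = (t-\<tau>) powr (a1-1)"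
        using tt by (simp add: powr_add[symmetric] g_def)
      ultimately show ?thesis by (simp add: mult_ac)
    qed
    finally have "exp (-(l*(t-\<tau>))) * \<tau> powr (-a1) * (t-\<tau>) powr (-\<beta>) \<le> ((t/2) powr (-a1) * l powr (-g)) * (t-\<tau>) powr (a1-1)" .
    moreover have "0 \<le> (exp (-(l*t/2)) * (t/2) powr (-\<beta>)) * \<tau> powr (-a1)" by simp
    ultimately show ?thesis by linarith
  qed
  have "exp (l*\<tau>) / (\<tau> powr \<alpha> * (t-\<tau>) powr \<beta>) = exp (l*t) * (exp (-(l*(t-\<tau>))) * \<tau> powr (-\<alpha>) * (t-\<tau>) powr (-\<beta>))"
    unfolding e1 by (simp add: powr_minus divide_inverse inverse_mult_distrib mult_ac)
  also have "\<dots> \<le> exp (l*t) * (exp (-(l*(t-\<tau>))) * (T powr (a1-\<alpha>) * \<tau> powr (-a1)) * (t-\<tau>) powr (-\<beta>))"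
    using mult_left_mono[OF mult_right_mono[OF mult_left_mono[OF i1, of "exp (-(l*(t-\<tau>)))"], of "(t-\<tau>) powr (-\<beta>)"], of "exp (l*t)"]
    by simp
  also have "\<dots> = T powr (a1-\<alpha>) * exp (l*t) * (exp (-(l*(t-\<tau>))) * \<tau> powr (-a1) * (t-\<tau>) powr (-\<beta>))"
    by simp
  also have "\<dots> \<le> T powr (a1-\<alpha>) * exp (l*t) * ((exp (-(l*t/2)) * (t/2) powr (-\<beta>)) * \<tau> powr (-a1) + ((t/2) powr (-a1) * l powr (-g)) * (t-\<tau>) powr (a1-1))"
    using mult_left_mono[OF K, of "T powr (a1-\<alpha>) * exp (l*t)"] by (simp add: g_def)
  finally show ?thesis unfolding g_def .
qed

lemma kernel_int:
  fixes \<beta> a1 l t :: real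
  assumes "0 < a1" "0 \<le> \<beta>" "a1 + \<beta> < 1" "l > 0" "t > 0"
  shows "(exp (-(l*t/2)) * (t/2) powr (-\<beta>)) * (t powr (1-a1) / (1-a1)) + ((t/2) powr (-a1) * l powr (-(1-a1-\<beta>))) * (t powr a1 / a1)
    \<le> (2/(1-a1) + 2/a1) * l powr (-(1-a1-\<beta>))"
proof -
  define g where "g = 1 - a1 - \<beta>"
  define u where "u = t/2"
  have g: "0 < g" "g \<le> 1" using assms unfolding g_def by auto
  have u: "u > 0" "t = 2*u" using assms unfolding u_def by auto
  have p1: "exp (-(l*u)) * u powr g \<le> l powr (-g)"
  proof -
    have "(l*u) powr g \<le> exp (l*u)" using u assms g by (intro powr_le_exp) auto
    then have "l powr g * u powr g \<le> exp (l*u)" using u assms by (simp add: powr_mult)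
    then show ?thesis using assms u by (simp add: powr_minus exp_minus field_simps)
  qed
  have "(exp (-(l*t/2)) * (t/2) powr (-\<beta>)) * t powr (1-a1) = 2 powr (1-a1) * (exp (-(l*u)) * u powr g)"
    using u by (simp add: u_def[symmetric] powr_mult powr_add[symmetric] g_def algebra_simps)
  also have "\<dots> \<le> 2 * l powr (-g)"
  proof (rule mult_mono)
    have "2 powr (1-a1) \<le> 2 powr (1::real)" using assms by (intro powr_mono) auto
    then show "2 powr (1-a1) \<le> 2" by simp
  qed (use p1 in auto)
  finally have A1: "(exp (-(l*t/2)) * (t/2) powr (-\<beta>)) * t powr (1-a1) \<le> 2 * l powr (-g)" .
  have "(t/2) powr (-a1) * t powr a1 = 2 powr a1"
    using u by (simp add: powr_mult powr_add[symmetric] powr_minus field_simps)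
  also have "\<dots> \<le> 2" using assms by (intro order.trans[OF powr_mono[of a1 1]]) auto
  finally have A2: "(t/2) powr (-a1) * t powr a1 \<le> 2" .
  have "(exp (-(l*t/2)) * (t/2) powr (-\<beta>)) * (t powr (1-a1) / (1-a1)) \<le> 2 * l powr (-g) / (1-a1)"
    using A1 assms by (simp add: divide_right_mono)
  moreover have "((t/2) powr (-a1) * l powr (-g)) * (t powr a1 / a1) \<le> 2 * l powr (-g) / a1"
  proof -
    have "((t/2) powr (-a1) * l powr (-g)) * (t powr a1 / a1) = ((t/2) powr (-a1) * t powr a1) * l powr (-g) / a1" by simp
    also have "\<dots> \<le> 2 * l powr (-g) / a1" using A2 assms by (intro divide_right_mono mult_right_mono) auto
    finally show ?thesis .
  qed
  ultimately show ?thesis unfolding g_def[symmetric] by (simp add: field_simps)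
qed



lemma int_bound:
  fixes \<alpha> \<beta> a1 l t T B :: real and f :: "real \<Rightarrow> real"
  assumes "0 \<le> \<alpha>" "\<alpha> \<le> a1" "0 < a1" "0 \<le> \<beta>" "a1 + \<beta> < 1" "l > 0"
    "0 < t" "t \<le> T" "0 \<le> B"
    and H: "AE \<tau> in lebesgue. \<tau> \<in> {0<..<t} \<longrightarrow> f \<tau> \<le> B * exp (l*\<tau>)"
  shows "(LINT \<tau>:{0<..<t}|lebesgue. f \<tau> / (\<tau> powr \<alpha> * (t-\<tau>) powr \<beta>))
     \<le> B * (T powr (a1-\<alpha>) * exp (l*t) * ((2/(1-a1) + 2/a1) * l powr (-(1-a1-\<beta>))))"
proof -
  define c1 where "c1 = exp (-(l*t/2)) * (t/2) powr (-\<beta>)"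
  define c2 where "c2 = (t/2) powr (-a1) * l powr (-(1-a1-\<beta>))"
  define K where "K = B * (T powr (a1-\<alpha>) * exp (l*t))"
  define D where "D = (\<lambda>\<tau>. K * (c1 * \<tau> powr (-a1)) + K * (c2 * (t-\<tau>) powr (a1-1)))"
  have K0: "K \<ge> 0" unfolding K_def using assms by simp
  have i1: "set_integrable lebesgue {0<..<t} (\<lambda>\<tau>. \<tau> powr (-a1))"
   and v1: "(LINT x:{0<..<t}|lebesgue. x powr (-a1)) = t powr (1-a1)/(1-a1)"
    using powr_int_0[of "-a1" t] assms by auto
  have i2: "set_integrable lebesgue {0<..<t} (\<lambda>\<tau>. (t-\<tau>) powr (a1-1))"
   and v2: "(LINT x:{0<..<t}|lebesgue. (t-x) powr (a1-1)) = t powr a1/a1"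
    using powr_int_refl[of "a1-1" t] assms by auto
  have iD: "set_integrable lebesgue {0<..<t} D"
    unfolding D_def using i1 i2 by (intro set_integral_add set_integrable_mult_right) auto
  have vD: "(LINT x:{0<..<t}|lebesgue. D x) = K * (c1 * (t powr (1-a1)/(1-a1))) + K * (c2 * (t powr a1/a1))"
    unfolding D_def using i1 i2 v1 v2 by (subst set_integral_add) auto
  have pw: "f \<tau> / (\<tau> powr \<alpha> * (t-\<tau>) powr \<beta>) \<le> D \<tau>"
    if "\<tau> \<in> {0<..<t}" "f \<tau> \<le> B * exp (l*\<tau>)" for \<tau>
  proof -
    have den: "\<tau> powr \<alpha> * (t-\<tau>) powr \<beta> > 0" using that by auto
    have "f \<tau> / (\<tau> powr \<alpha> * (t-\<tau>) powr \<beta>) \<le> B * exp (l*\<tau>) / (\<tau> powr \<alpha> * (t-\<tau>) powr \<beta>)"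
      using that den by (intro divide_right_mono) auto
    also have "\<dots> = B * (exp (l*\<tau>) / (\<tau> powr \<alpha> * (t-\<tau>) powr \<beta>))" by simp
    also have "\<dots> \<le> B * (T powr (a1-\<alpha>) * exp (l*t) * (c1 * \<tau> powr (-a1) + c2 * (t-\<tau>) powr (a1-1)))"
      using kernel_pw[of \<alpha> a1 \<beta> l \<tau> t T] assms that unfolding c1_def c2_def
      by (intro mult_left_mono) auto
    also have "\<dots> = D \<tau>" unfolding D_def K_def by (simp add: algebra_simps)
    finally show ?thesis .
  qed
  have D0: "D \<tau> \<ge> 0" for \<tau> unfolding D_def c1_def c2_def using K0 by simp
  have "(LINT \<tau>:{0<..<t}|lebesgue. f \<tau> / (\<tau> powr \<alpha> * (t-\<tau>) powr \<beta>)) \<le> (LINT x:{0<..<t}|lebesgue. D x)"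
    unfolding set_lebesgue_integral_def
  proof (rule integral_mono_AE')
    show "integrable lebesgue (\<lambda>x. indicat_real {0<..<t} x *\<^sub>R D x)"
      using iD unfolding set_integrable_def .
    show "AE x in lebesgue. indicat_real {0<..<t} x *\<^sub>R (f x / (x powr \<alpha> * (t - x) powr \<beta>))
        \<le> indicat_real {0<..<t} x *\<^sub>R D x"
      using H by eventually_elim (auto simp: indicator_def pw)
    show "AE x in lebesgue. 0 \<le> indicat_real {0<..<t} x *\<^sub>R D x"
      using D0 by (auto simp: indicator_def)
  qed
  also have "\<dots> = K * (c1 * (t powr (1-a1)/(1-a1)) + c2 * (t powr a1/a1))"
    unfolding vD by (simp add: algebra_simps)
  also have "\<dots> \<le> K * ((2/(1-a1) + 2/a1) * l powr (-(1-a1-\<beta>)))"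
    using kernel_int[of a1 \<beta> l t] assms K0 unfolding c1_def c2_def by (intro mult_left_mono) auto
  finally show ?thesis unfolding K_def by (simp add: mult_ac)
qed

lemma int_bound0:
  fixes b t B :: real and f :: "real \<Rightarrow> real"
  assumes "b > 0" "0 < t" "0 \<le> B"
    and H: "AE \<tau> in lebesgue. \<tau> \<in> {0<..<t} \<longrightarrow> f \<tau> \<le> B * exp (b*\<tau>)"
  shows "(LINT \<tau>:{0<..<t}|lebesgue. f \<tau> / (\<tau> powr 0 * (t-\<tau>) powr 0)) \<le> B * ((exp (b*t) - 1)/b)"
proof -
  have h1: "((\<lambda>x. exp (b*x)) has_integral (exp (b*t)/b - exp (b*0)/b)) {0..t}"
    using assms
    by (intro fundamental_theorem_of_calculus)
       (auto intro!: derivative_eq_intros simp: has_real_derivative_iff_has_vector_derivative[symmetric])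
  then have h1: "((\<lambda>x. exp (b*x)) has_integral ((exp (b*t) - 1)/b)) {0..t}"
    by (simp add: diff_divide_distrib)
  have h2: "((\<lambda>x. exp (b*x)) has_integral ((exp (b*t) - 1)/b)) {0<..<t}"
    using h1 by (subst has_integral_spike_set_eq[where T="{0..t}"])
      (auto intro: negligible_subset[of "{0,t}"])
  have si: "set_integrable lebesgue {0<..<t} (\<lambda>x. exp (b*x))"
    by (rule nonnegative_absolutely_integrable_1) (use h2 in \<open>auto simp: integrable_on_def\<close>)
  have v: "(LINT x:{0<..<t}|lebesgue. exp (b*x)) = (exp (b*t) - 1)/b"
    using set_lebesgue_integral_eq_integral(2)[OF si] h2 by (simp add: integral_unique)
  have "(LINT \<tau>:{0<..<t}|lebesgue. f \<tau> / (\<tau> powr 0 * (t-\<tau>) powr 0)) \<le> (LINT x:{0<..<t}|lebesgue. B * exp (b*x))"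
    unfolding set_lebesgue_integral_def
  proof (rule integral_mono_AE')
    show "integrable lebesgue (\<lambda>x. indicat_real {0<..<t} x *\<^sub>R (B * exp (b*x)))"
      using set_integrable_mult_right[OF si, of B] unfolding set_integrable_def .
    show "AE x in lebesgue. indicat_real {0<..<t} x *\<^sub>R (f x / (x powr 0 * (t - x) powr 0))
        \<le> indicat_real {0<..<t} x *\<^sub>R (B * exp (b*x))"
      using H by eventually_elim (auto simp: indicator_def)
    show "AE x in lebesgue. 0 \<le> indicat_real {0<..<t} x *\<^sub>R (B * exp (b*x))"
      using assms by (auto simp: indicator_def)
  qed
  also have "\<dots> = B * ((exp (b*t) - 1)/b)" using v by simp
  finally show ?thesis .
qed

lemma iterate:
  fixes f w :: "real \<Rightarrow> real" and S :: "real set"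
  assumes "0 \<le> \<rho>" "\<rho> < 1" "\<And>x. 0 \<le> w x"
    and step: "\<And>M. 0 \<le> M \<Longrightarrow> (AE x in lebesgue. x \<in> S \<longrightarrow> f x \<le> (c0 + M) * w x) \<Longrightarrow>
                  (AE x in lebesgue. x \<in> S \<longrightarrow> f x \<le> (c0 + \<rho> * M) * w x)"
    and "0 \<le> Mi" and init: "AE x in lebesgue. x \<in> S \<longrightarrow> f x \<le> (c0 + Mi) * w x"
  shows "AE x in lebesgue. x \<in> S \<longrightarrow> f x \<le> c0 * w x"
proof -
  have n: "AE x in lebesgue. x \<in> S \<longrightarrow> f x \<le> (c0 + \<rho>^n * Mi) * w x" for n
  proof (induction n)
    case 0 then show ?case using init by simp
  next
    case (Suc n)
    have "0 \<le> \<rho>^n * Mi" using assms by simp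
    from step[OF this Suc] show ?case by (simp add: mult_ac)
  qed
  then have "AE x in lebesgue. \<forall>n. x \<in> S \<longrightarrow> f x \<le> (c0 + \<rho>^n * Mi) * w x"
    using AE_all_countable[where 'i=nat and M=lebesgue and P="\<lambda>n x. x \<in> S \<longrightarrow> f x \<le> (c0 + \<rho>^n * Mi) * w x"] n
    by simp
  then show ?thesis
  proof eventually_elim
    case (elim x)
    show ?case
    proof
      assume "x \<in> S"
      have "(\<lambda>n. (c0 + \<rho>^n * Mi) * w x) \<longlonglongrightarrow> (c0 + 0 * Mi) * w x"
        using assms by (intro tendsto_intros LIMSEQ_power_zero) auto
      moreover have "\<exists>N. \<forall>n\<ge>N. f x \<le> (c0 + \<rho>^n * Mi) * w x" using elim \<open>x \<in> S\<close> by blast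
      ultimately show "f x \<le> c0 * w x" using LIMSEQ_le_const by fastforce
    qed
  qed
qed

lemma seqT: fixes T x :: real assumes "0 < T" "x < T"
  shows "\<exists>n. x < T - T * inverse (real (Suc n))"
proof -
  have "(\<lambda>n. T - T * inverse (real (Suc n))) \<longlonglongrightarrow> T - T * 0"
    by (intro tendsto_intros LIMSEQ_inverse_real_of_nat)
  then have "eventually (\<lambda>n. x < T - T * inverse (real (Suc n))) sequentially"
    using assms by (intro order_tendstoD) auto
  then show ?thesis by (meson eventually_sequentially order_refl)
qed

lemma seqT_lt: fixes T :: real assumes "0 < T" shows "T - T * inverse (real (Suc n)) < T"
  using assms by simp

lemma meas_union:
  fixes f :: "real \<Rightarrow> real"
  assumes "0 < T" "\<forall>T' < T. f \<in> borel_measurable (restrict_space lebesgue {0<..<T'})"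
  shows "f \<in> borel_measurable (restrict_space lebesgue {0<..<T})"
proof -
  define Tn where "Tn = (\<lambda>n::nat. T - T * inverse (real (Suc n)))"
  have Tn: "Tn n < T" for n unfolding Tn_def using assms by simp
  have m: "(\<lambda>x. indicator {0<..<Tn n} x *\<^sub>R f x) \<in> borel_measurable lebesgue" for n
    using assms(2) Tn[of n] by (subst borel_measurable_restrict_space_iff[symmetric]) auto
  have "(\<lambda>x. indicator {0<..<T} x *\<^sub>R f x) \<in> borel_measurable lebesgue"
  proof (rule borel_measurable_LIMSEQ_real[OF _ m])
    fix x :: real
    show "(\<lambda>n. indicator {0<..<Tn n} x *\<^sub>R f x) \<longlonglongrightarrow> indicator {0<..<T} x *\<^sub>R f x"
    proof (rule tendsto_eventually)
      show "eventually (\<lambda>n. indicator {0<..<Tn n} x *\<^sub>R f x = indicator {0<..<T} x *\<^sub>R f x) sequentially"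
      proof (cases "0 < x \<and> x < T")
        case True
        then obtain N where "x < Tn N" using seqT[of T x] assms unfolding Tn_def by auto
        moreover have "Tn N \<le> Tn n" if "N \<le> n" for n
          unfolding Tn_def using that assms by (auto intro!: mult_left_mono le_imp_inverse_le)
        ultimately have "\<forall>n\<ge>N. x < Tn n" by (meson order_less_le_trans)
        then show ?thesis using True unfolding eventually_sequentially
          by (intro exI[of _ N]) (auto simp: indicator_def)
      next
        case False
        then have "\<forall>n. \<not> (0 < x \<and> x < Tn n)" using Tn by (meson less_trans)
        then show ?thesis using False by (auto simp: indicator_def)
      qed
    qed
  qed
  then show ?thesis by (subst borel_measurable_restrict_space_iff) auto
qed



definition Kc :: "real \<Rightarrow> real \<Rightarrow> real" where
  "Kc \<alpha> \<beta> = (let e = (1-\<alpha>-\<beta>)*(\<alpha>+\<beta>)/(1+\<alpha>+\<beta>); a1 = \<alpha> + e; g = 1 - a1 - \<beta>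
     in (2 * (2/(1-a1) + 2/a1)) powr (1/g))"

lemma general_case:
  fixes \<alpha> \<beta> a b T :: real and f :: "real \<Rightarrow> real"
  assumes "\<alpha> \<ge> 0" "\<beta> \<ge> 0" "\<alpha> + \<beta> < 1" "\<alpha> + \<beta> > 0" "a \<ge> 0" "b > 0" "T > 0"
    and bd: "\<forall>T' < T. f \<in> borel_measurable (restrict_space lebesgue {0<..<T'}) \<and>
                  (\<exists>M. AE t in lebesgue. t \<in> {0<..<T'} \<longrightarrow> \<bar>f t\<bar> \<le> M)"
    and H: "AE t in lebesgue. t \<in> {0<..<T} \<longrightarrow>
          0 \<le> f t \<and>
          f t \<le> a + b * (LINT \<tau>:{0<..<t}|lebesgue. f \<tau> / (\<tau> powr \<alpha> * (t - \<tau>) powr \<beta>))"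
  shows "AE t in lebesgue. t \<in> {0<..<T} \<longrightarrow>
          \<bar>f t\<bar> \<le> 2 * a * exp (Kc \<alpha> \<beta> * b powr ((1 + \<alpha> + \<beta>) / (1 - \<alpha> - \<beta>)) * T powr (1 + \<alpha> + \<beta>))"
proof -
  define e where "e = (1-\<alpha>-\<beta>)*(\<alpha>+\<beta>)/(1+\<alpha>+\<beta>)"
  define a1 where "a1 = \<alpha> + e"
  define g where "g = 1 - a1 - \<beta>"
  define A where "A = 2/(1-a1) + 2/a1"
  have e0: "e > 0" unfolding e_def using assms by auto
  have eg: "e < 1 - \<alpha> - \<beta>"
  proof -
    have "(\<alpha>+\<beta>)/(1+\<alpha>+\<beta>) < 1" using assms by auto
    then have "(1-\<alpha>-\<beta>)*((\<alpha>+\<beta>)/(1+\<alpha>+\<beta>)) < (1-\<alpha>-\<beta>) * 1"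
      using assms by (intro mult_strict_left_mono) auto
    then show ?thesis unfolding e_def by simp
  qed
  have a1: "0 < a1" "\<alpha> \<le> a1" "a1 + \<beta> < 1" unfolding a1_def using e0 eg assms by auto
  have g0: "g > 0" unfolding g_def using a1 by simp
  have gval: "g = (1-\<alpha>-\<beta>)/(1+\<alpha>+\<beta>)"
    unfolding g_def a1_def e_def using assms by (simp add: field_simps)
  have A0: "A > 0" unfolding A_def using a1 assms by (intro add_pos_pos divide_pos_pos) auto
  have KcA: "Kc \<alpha> \<beta> = (2*A) powr (1/g)" unfolding Kc_def A_def g_def a1_def e_def Let_def by simp
  define P where "P = 2*b*T powr e*A"
  have P0: "P > 0" unfolding P_def using assms A0 by simp
  define l where "l = P powr (1/g)"
  have l0: "l > 0" unfolding l_def using P0 by simp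
  have key: "b * (T powr e * A * l powr (-g)) = 1/2"
  proof -
    have "l powr (-g) = P powr (-1)" unfolding l_def using g0 by (simp add: powr_powr)
    also have "\<dots> = 1/P" using P0 by (simp add: powr_minus divide_inverse)
    finally show ?thesis unfolding P_def using assms A0 by (simp add: field_simps)
  qed
  have Ta1: "T powr (a1 - \<alpha>) = T powr e" unfolding a1_def by simp
  have Aeq: "2/(1-a1) + 2/a1 = A" unfolding A_def ..
  have main: "AE t in lebesgue. t \<in> {0<..<T'} \<longrightarrow> f t \<le> (2*a) * exp (l*t)" if T': "T' < T" for T'
  proof -
    obtain M where M: "AE t in lebesgue. t \<in> {0<..<T'} \<longrightarrow> \<bar>f t\<bar> \<le> M" using bd T' by blast
    show ?thesis
  proof (rule iterate[where \<rho>="1/2" and Mi="max 0 M"])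
    show "AE t in lebesgue. t \<in> {0<..<T'} \<longrightarrow> f t \<le> (2*a + max 0 M) * exp (l*t)"
      using M
    proof eventually_elim
      case (elim t)
      show ?case
      proof
        assume t: "t \<in> {0<..<T'}"
        have "1 \<le> exp (l*t)" using t l0 by simp
        then have "2*a + max 0 M \<le> (2*a + max 0 M) * exp (l*t)"
          using assms by (simp add: mult_le_cancel_left1)
        then show "f t \<le> (2*a + max 0 M) * exp (l*t)" using elim t assms by auto
      qed
    qed
  next
    fix M :: real
    assume M0: "0 \<le> M"
      and hM: "AE t in lebesgue. t \<in> {0<..<T'} \<longrightarrow> f t \<le> (2*a + M) * exp (l*t)"
    show "AE t in lebesgue. t \<in> {0<..<T'} \<longrightarrow> f t \<le> (2*a + 1/2 * M) * exp (l*t)"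
      using H
    proof eventually_elim
      case (elim t)
      show ?case
      proof
        assume t: "t \<in> {0<..<T'}"
        then have tT: "t \<in> {0<..<T}" using T' by auto
        have hM': "AE \<tau> in lebesgue. \<tau> \<in> {0<..<t} \<longrightarrow> f \<tau> \<le> (2*a + M) * exp (l*\<tau>)"
          using hM by eventually_elim (use t in auto)
        have I: "(LINT \<tau>:{0<..<t}|lebesgue. f \<tau> / (\<tau> powr \<alpha> * (t-\<tau>) powr \<beta>))
            \<le> (2*a + M) * (T powr e * exp (l*t) * (A * l powr (-g)))"
          using int_bound[of \<alpha> a1 \<beta> l t T "2*a+M" f, OF _ _ _ _ _ l0 _ _ _ hM'] assms a1 tT M0
          unfolding Ta1 Aeq g_def by auto
        have "f t \<le> a + b * (LINT \<tau>:{0<..<t}|lebesgue. f \<tau> / (\<tau> powr \<alpha> * (t-\<tau>) powr \<beta>))"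
          using elim tT by auto
        also have "\<dots> \<le> a + b * ((2*a + M) * (T powr e * exp (l*t) * (A * l powr (-g))))"
          by (rule add_left_mono, rule mult_left_mono[OF I]) (use assms in simp)
        also have "\<dots> = a + (2*a + M) * exp (l*t) * (b * (T powr e * A * l powr (-g)))"
          by (simp add: mult_ac)
        also have "\<dots> = a + (2*a + M) * exp (l*t) / 2" unfolding key by simp
        also have "\<dots> \<le> (2*a + 1/2 * M) * exp (l*t)"
        proof -
          have "1 \<le> exp (l*t)" using t l0 by simp
          then have "a \<le> a * exp (l*t)" using assms by (simp add: mult_le_cancel_left1)
          then show ?thesis by (simp add: algebra_simps add_divide_distrib; linarith)
        qed
        finally show "f t \<le> (2*a + 1/2 * M) * exp (l*t)" .
      qed
    qed
  qed auto
  qed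
  define Tn where "Tn = (\<lambda>n::nat. T - T * inverse (real (Suc n)))"
  have "AE t in lebesgue. \<forall>n. t \<in> {0<..<Tn n} \<longrightarrow> f t \<le> (2*a) * exp (l*t)"
    using AE_all_countable[where 'i=nat and M=lebesgue and P="\<lambda>n t. t \<in> {0<..<Tn n} \<longrightarrow> f t \<le> (2*a) * exp (l*t)"]
      main[of "Tn _"] assms unfolding Tn_def by simp
  then have "AE t in lebesgue. t \<in> {0<..<T} \<longrightarrow> \<bar>f t\<bar> \<le> 2 * a * exp (l*T)"
    using H
  proof eventually_elim
    case (elim t)
    show ?case
    proof
      assume t: "t \<in> {0<..<T}"
      then obtain n where "t < Tn n" using seqT[of T t] assms unfolding Tn_def by auto
      then have "f t \<le> 2 * a * exp (l*t)" using elim t by auto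
      also have "\<dots> \<le> 2 * a * exp (l*T)" using t l0 assms by (intro mult_left_mono) auto
      finally show "\<bar>f t\<bar> \<le> 2 * a * exp (l*T)" using elim t by auto
    qed
  qed
  moreover have "l * T = Kc \<alpha> \<beta> * b powr ((1 + \<alpha> + \<beta>) / (1 - \<alpha> - \<beta>)) * T powr (1 + \<alpha> + \<beta>)"
  proof -
    have g1: "1/g = (1 + \<alpha> + \<beta>) / (1 - \<alpha> - \<beta>)" unfolding gval by simp
    have "e = g * (\<alpha> + \<beta>)" unfolding gval e_def by simp
    then have eg1: "e * (1/g) + 1 = 1 + \<alpha> + \<beta>" using g0 by simp
    have "l = (2*A) powr (1/g) * b powr (1/g) * T powr (e * (1/g))"
      unfolding l_def P_def using assms A0 by (simp add: powr_mult powr_powr mult_ac)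
    then have "l * T = (2*A) powr (1/g) * b powr (1/g) * T powr (e * (1/g) + 1)"
      using assms by (simp add: powr_add)
    then have "l * T = (2*A) powr (1/g) * b powr (1/g) * T powr (1 + \<alpha> + \<beta>)"
      by (simp only: eg1)
    then show ?thesis unfolding KcA g1 .
  qed
  ultimately show ?thesis by simp
qed



lemma sharp_case:
  fixes a b T :: real and f :: "real \<Rightarrow> real"
  assumes "a \<ge> 0" "b > 0" "T > 0"
    and bd: "\<forall>T' < T. f \<in> borel_measurable (restrict_space lebesgue {0<..<T'}) \<and>
                  (\<exists>M. AE t in lebesgue. t \<in> {0<..<T'} \<longrightarrow> \<bar>f t\<bar> \<le> M)"
    and H: "AE t in lebesgue. t \<in> {0<..<T} \<longrightarrow>
          0 \<le> f t \<and>
          f t \<le> a + b * (LINT \<tau>:{0<..<t}|lebesgue. f \<tau> / (\<tau> powr 0 * (t - \<tau>) powr 0))"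
  shows "AE t in lebesgue. t \<in> {0<..<T} \<longrightarrow> \<bar>f t\<bar> \<le> a * exp (b * T)"
proof -
  have main: "AE t in lebesgue. t \<in> {0<..<T'} \<longrightarrow> f t \<le> a * exp (b*t)" if T': "T' < T" "0 \<le> T'" for T'
  proof (rule iterate[where \<rho>="1 - exp (-(b*T'))" and Mi="max 0 (SOME M. AE t in lebesgue. t \<in> {0<..<T'} \<longrightarrow> \<bar>f t\<bar> \<le> M)"])
    obtain M where M: "AE t in lebesgue. t \<in> {0<..<T'} \<longrightarrow> \<bar>f t\<bar> \<le> M" using bd T' by blast
    define M1 where "M1 = (SOME M. AE t in lebesgue. t \<in> {0<..<T'} \<longrightarrow> \<bar>f t\<bar> \<le> M)"
    have M1: "AE t in lebesgue. t \<in> {0<..<T'} \<longrightarrow> \<bar>f t\<bar> \<le> M1"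
      unfolding M1_def by (rule someI[of _ M]) (rule M)
    show "AE t in lebesgue. t \<in> {0<..<T'} \<longrightarrow> f t \<le> (a + max 0 M1) * exp (b*t)"
      using M1
    proof eventually_elim
      case (elim t)
      show ?case
      proof
        assume t: "t \<in> {0<..<T'}"
        have "1 \<le> exp (b*t)" using t assms by simp
        then have "a + max 0 M1 \<le> (a + max 0 M1) * exp (b*t)"
          using assms by (simp add: mult_le_cancel_left1)
        then show "f t \<le> (a + max 0 M1) * exp (b*t)" using elim t assms by auto
      qed
    qed
  next
    show "0 \<le> 1 - exp (-(b*T'))" using T' assms by simp
    show "1 - exp (-(b*T')) < 1" by simp
  next
    fix M :: real
    assume M0: "0 \<le> M"
      and hM: "AE t in lebesgue. t \<in> {0<..<T'} \<longrightarrow> f t \<le> (a + M) * exp (b*t)"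
    show "AE t in lebesgue. t \<in> {0<..<T'} \<longrightarrow> f t \<le> (a + (1 - exp (-(b*T'))) * M) * exp (b*t)"
      using H
    proof eventually_elim
      case (elim t)
      show ?case
      proof
        assume t: "t \<in> {0<..<T'}"
        then have tT: "t \<in> {0<..<T}" using T' by auto
        have hM': "AE \<tau> in lebesgue. \<tau> \<in> {0<..<t} \<longrightarrow> f \<tau> \<le> (a + M) * exp (b*\<tau>)"
          using hM by eventually_elim (use t in auto)
        have I: "(LINT \<tau>:{0<..<t}|lebesgue. f \<tau> / (\<tau> powr 0 * (t-\<tau>) powr 0))
            \<le> (a + M) * ((exp (b*t) - 1)/b)"
          using int_bound0[of b t "a+M" f, OF _ _ _ hM'] assms tT M0 by auto
        have "f t \<le> a + b * (LINT \<tau>:{0<..<t}|lebesgue. f \<tau> / (\<tau> powr 0 * (t-\<tau>) powr 0))"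
          using elim tT by auto
        also have "\<dots> \<le> a + b * ((a + M) * ((exp (b*t) - 1)/b))"
          by (rule add_left_mono, rule mult_left_mono[OF I]) (use assms in simp)
        also have "\<dots> = (a + M) * exp (b*t) - M" using assms by (simp add: field_simps)
        also have "\<dots> \<le> (a + (1 - exp (-(b*T'))) * M) * exp (b*t)"
        proof -
          have "exp (-(b*T')) * exp (b*t) = exp (b*t - b*T')" by (simp add: exp_add[symmetric])
          also have "\<dots> \<le> 1" using t assms by simp
          finally have "M * (exp (-(b*T')) * exp (b*t)) \<le> M" using M0
            by (rule mult_left_le)
          then show ?thesis by (simp add: algebra_simps)
        qed
        finally show "f t \<le> (a + (1 - exp (-(b*T'))) * M) * exp (b*t)" .
      qed
    qed
  qed auto
  define Tn where "Tn = (\<lambda>n::nat. T - T * inverse (real (Suc n)))"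
  have Tn: "Tn n < T" "0 \<le> Tn n" for n
    unfolding Tn_def using assms by (auto simp: field_simps)
  have "AE t in lebesgue. \<forall>n. t \<in> {0<..<Tn n} \<longrightarrow> f t \<le> a * exp (b*t)"
    using AE_all_countable[where 'i=nat and M=lebesgue and P="\<lambda>n t. t \<in> {0<..<Tn n} \<longrightarrow> f t \<le> a * exp (b*t)"]
      main[OF Tn] by simp
  then show ?thesis
    using H
  proof eventually_elim
    case (elim t)
    show ?case
    proof
      assume t: "t \<in> {0<..<T}"
      then obtain n where "t < Tn n" using seqT[of T t] assms unfolding Tn_def by auto
      then have "f t \<le> a * exp (b*t)" using elim t by auto
      also have "\<dots> \<le> a * exp (b*T)" using t assms by (intro mult_left_mono) auto
      finally show "\<bar>f t\<bar> \<le> a * exp (b*T)" using elim t by auto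
    qed
  qed
qed



theorem lemma2:
  fixes \<alpha> \<beta> :: real
  assumes "\<alpha> \<ge> 0" and "\<beta> \<ge> 0" and "\<alpha> + \<beta> < 1"
  shows "\<exists>C::real. (\<alpha> = 0 \<and> \<beta> = 0 \<longrightarrow> C = 1) \<and>
    (\<forall>(a::real) (b::real) (T::real) (f::real \<Rightarrow> real).
       a \<ge> 0 \<longrightarrow> b > 0 \<longrightarrow> T > 0 \<longrightarrow>
       (\<forall>T' < T. f \<in> borel_measurable (restrict_space lebesgue {0<..<T'}) \<and>
                  (\<exists>M. AE t in lebesgue. t \<in> {0<..<T'} \<longrightarrow> \<bar>f t\<bar> \<le> M)) \<longrightarrow>
       (AE t in lebesgue. t \<in> {0<..<T} \<longrightarrow>
          0 \<le> f t \<and>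
          f t \<le> a + b * (LINT \<tau>:{0<..<t}|lebesgue. f \<tau> / (\<tau> powr \<alpha> * (t - \<tau>) powr \<beta>))) \<longrightarrow>
       f \<in> borel_measurable (restrict_space lebesgue {0<..<T}) \<and>
       (AE t in lebesgue. t \<in> {0<..<T} \<longrightarrow>
          \<bar>f t\<bar> \<le> C * a * exp (C * b powr ((1 + \<alpha> + \<beta>) / (1 - \<alpha> - \<beta>)) * T powr (1 + \<alpha> + \<beta>))))"
proof (cases "\<alpha> = 0 \<and> \<beta> = 0")
  case True
  show ?thesis
  proof (intro exI[of _ 1] conjI impI allI)
    fix a b T :: real and f :: "real \<Rightarrow> real"
    assume a: "a \<ge> 0" and b: "b > 0" and T: "T > 0"
      and bd: "\<forall>T' < T. f \<in> borel_measurable (restrict_space lebesgue {0<..<T'}) \<and>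
                  (\<exists>M. AE t in lebesgue. t \<in> {0<..<T'} \<longrightarrow> \<bar>f t\<bar> \<le> M)"
      and H: "AE t in lebesgue. t \<in> {0<..<T} \<longrightarrow>
          0 \<le> f t \<and>
          f t \<le> a + b * (LINT \<tau>:{0<..<t}|lebesgue. f \<tau> / (\<tau> powr \<alpha> * (t - \<tau>) powr \<beta>))"
    show "f \<in> borel_measurable (restrict_space lebesgue {0<..<T})"
      using meas_union[of T f] T bd by blast
    have "AE t in lebesgue. t \<in> {0<..<T} \<longrightarrow> \<bar>f t\<bar> \<le> a * exp (b * T)"
      using sharp_case[of a b T f] a b T bd H True by simp
    then show "AE t in lebesgue. t \<in> {0<..<T} \<longrightarrow>
          \<bar>f t\<bar> \<le> 1 * a * exp (1 * b powr ((1 + \<alpha> + \<beta>) / (1 - \<alpha> - \<beta>)) * T powr (1 + \<alpha> + \<beta>))"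
      using True b T by simp
  qed simp
next
  case False
  then have s: "\<alpha> + \<beta> > 0" using assms by auto
  define C where "C = max 2 (Kc \<alpha> \<beta>)"
  show ?thesis
  proof (intro exI[of _ C] conjI impI allI)
    show "\<alpha> = 0 \<and> \<beta> = 0 \<Longrightarrow> C = 1" using False by blast
  next
    fix a b T :: real and f :: "real \<Rightarrow> real"
    assume a: "a \<ge> 0" and b: "b > 0" and T: "T > 0"
      and bd: "\<forall>T' < T. f \<in> borel_measurable (restrict_space lebesgue {0<..<T'}) \<and>
                  (\<exists>M. AE t in lebesgue. t \<in> {0<..<T'} \<longrightarrow> \<bar>f t\<bar> \<le> M)"
      and H: "AE t in lebesgue. t \<in> {0<..<T} \<longrightarrow>
          0 \<le> f t \<and>
          f t \<le> a + b * (LINT \<tau>:{0<..<t}|lebesgue. f \<tau> / (\<tau> powr \<alpha> * (t - \<tau>) powr \<beta>))"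
    show "f \<in> borel_measurable (restrict_space lebesgue {0<..<T})"
      using meas_union[of T f] T bd by blast
    define X where "X = b powr ((1 + \<alpha> + \<beta>) / (1 - \<alpha> - \<beta>)) * T powr (1 + \<alpha> + \<beta>)"
    have X0: "X \<ge> 0" unfolding X_def by simp
    have "AE t in lebesgue. t \<in> {0<..<T} \<longrightarrow> \<bar>f t\<bar> \<le> 2 * a * exp (Kc \<alpha> \<beta> * X)"
      using general_case[OF assms s a b T bd H] unfolding X_def by (simp add: mult.assoc)
    moreover have "2 * a * exp (Kc \<alpha> \<beta> * X) \<le> C * a * exp (C * X)"
    proof -
      have "Kc \<alpha> \<beta> * X \<le> C * X" unfolding C_def using X0 by (intro mult_right_mono) auto
      then have "exp (Kc \<alpha> \<beta> * X) \<le> exp (C * X)" by simp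
      moreover have "2 * a \<le> C * a" unfolding C_def using a by (intro mult_right_mono) auto
      moreover have "0 \<le> C" unfolding C_def by simp
      moreover have "2 \<le> C" unfolding C_def by simp
      ultimately show ?thesis using a by (intro mult_mono) auto
    qed
    ultimately show "AE t in lebesgue. t \<in> {0<..<T} \<longrightarrow>
          \<bar>f t\<bar> \<le> C * a * exp (C * b powr ((1 + \<alpha> + \<beta>) / (1 - \<alpha> - \<beta>)) * T powr (1 + \<alpha> + \<beta>))"
      unfolding X_def[symmetric] mult.assoc[of C "b powr _"] by (auto elim!: eventually_mono)
  qed
qed

end
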